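(* Let $q\ge2$ and let $f$ be a $(q^2-1,1)$-coloring of $H(q+1,q)$ whose color-$1$ class is a $1$-perfect code and whose color-$2$ class can be partitioned into lines. Then for every positive integer $p$ and every $t\in\{0,\dots,p-1\}$ there exists a $\big((q^2-1)(p-t),\ (q^2-1)t+p\big)$-coloring of $H(q+1,pq)$; its main eigenvalue is $q(p-1)-1$.
   Context: The Hamming graph $H(n,q)$ has vertex set $\mathbb{Z}_q^n$, two vertices adjacent iff they differ in exactly one coordinate. A line ($1$-face) is a set of $q$ vertices obtained by fixing all coordinates but one. A $(b,c)$-coloring of $H(n,q)$ is a surjective map onto $\{1,2\}$ in which each color-1 vertex has exactly $b$ neighbours of color 2 and each color-2 vertex has exactly $c$ neighbours of color 1; its main eigenvalue is $n(q-1)-(b+c)$. A $1$-perfect code is a set $C$ of vertices such that every radius-$1$ Hamming ball contains exactly one element of $C$. *)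

theory Defs
  imports Main
begin

definition hvert :: "nat \<Rightarrow> nat \<Rightarrow> (nat \<Rightarrow> nat) set" where
  "hvert n q = {x. (\<forall>i<n. x i < q) \<and> (\<forall>i. n \<le> i \<longrightarrow> x i = 0)}"

definition hadj :: "nat \<Rightarrow> (nat \<Rightarrow> nat) \<Rightarrow> (nat \<Rightarrow> nat) \<Rightarrow> bool" where
  "hadj n x y = (card {i. i < n \<and> x i \<noteq> y i} = 1)"

definition is_coloring :: "nat \<Rightarrow> nat \<Rightarrow> nat \<Rightarrow> nat \<Rightarrow> ((nat \<Rightarrow> nat) \<Rightarrow> nat) \<Rightarrow> bool" where
  "is_coloring n q b c f =
     (f ` hvert n q = {1, 2} \<and>
      (\<forall>x\<in>hvert n q. f x = 1 \<longrightarrow> card {y\<in>hvert n q. hadj n x y \<and> f y = 2} = b) \<and>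
      (\<forall>x\<in>hvert n q. f x = 2 \<longrightarrow> card {y\<in>hvert n q. hadj n x y \<and> f y = 1} = c))"

definition main_eigenvalue :: "nat \<Rightarrow> nat \<Rightarrow> nat \<Rightarrow> nat \<Rightarrow> int" where
  "main_eigenvalue n q b c = int n * (int q - 1) - (int b + int c)"

definition is_line :: "nat \<Rightarrow> nat \<Rightarrow> (nat \<Rightarrow> nat) set \<Rightarrow> bool" where
  "is_line n q L = (\<exists>i<n. \<exists>x\<in>hvert n q. L = {x(i := a) | a. a < q})"

definition perfect_code :: "nat \<Rightarrow> nat \<Rightarrow> (nat \<Rightarrow> nat) set \<Rightarrow> bool" where
  "perfect_code n q C = (C \<subseteq> hvert n q \<and>
     (\<forall>x\<in>hvert n q. card {y\<in>C. y = x \<or> hadj n x y} = 1))"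

definition partitionable_into_lines :: "nat \<Rightarrow> nat \<Rightarrow> (nat \<Rightarrow> nat) set \<Rightarrow> bool" where
  "partitionable_into_lines n q S = (\<exists>P. (\<forall>L\<in>P. is_line n q L) \<and>
     (\<forall>L1\<in>P. \<forall>L2\<in>P. L1 \<noteq> L2 \<longrightarrow> L1 \<inter> L2 = {}) \<and> \<Union>P = S)"

end

theory Submission
  imports Defs
begin


lemma hvert_upd: "x \<in> hvert n m \<Longrightarrow> i < n \<Longrightarrow> a < m \<Longrightarrow> x(i:=a) \<in> hvert n m"
  by (auto simp: hvert_def)

lemma nbr_decomp:
  assumes x: "x \<in> hvert n m"
  shows "card {z\<in>hvert n m. hadj n x z \<and> R z} = (\<Sum>i<n. card {a. a<m \<and> a \<noteq> x i \<and> R (x(i:=a))})"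
proof -
  let ?S = "SIGMA i:{..<n}. {a. a<m \<and> a \<noteq> x i \<and> R (x(i:=a))}"
  have eq: "{z\<in>hvert n m. hadj n x z \<and> R z} = (\<lambda>(i,a). x(i:=a)) ` ?S"
  proof
    show "{z\<in>hvert n m. hadj n x z \<and> R z} \<subseteq> (\<lambda>(i,a). x(i:=a)) ` ?S"
    proof
      fix z assume z: "z \<in> {z\<in>hvert n m. hadj n x z \<and> R z}"
      then obtain i where i: "{i. i < n \<and> x i \<noteq> z i} = {i}"
        by (auto simp: hadj_def card_1_singleton_iff)
      have i1: "i < n" "x i \<noteq> z i" using i by auto
      have agree: "\<And>j. j < n \<Longrightarrow> j \<noteq> i \<Longrightarrow> x j = z j" using i by blast
      have zx: "z = x(i := z i)"
      proof
        fix j show "z j = (x(i := z i)) j"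
        proof (cases "j < n")
          case True then show ?thesis using agree by (cases "j = i") auto
        next
          case False then show ?thesis using z x i1 by (auto simp: hvert_def)
        qed
      qed
      have "z i < m" using z i1 by (auto simp: hvert_def)
      then have "(i, z i) \<in> ?S" using i1 z zx by auto
      then show "z \<in> (\<lambda>(i,a). x(i:=a)) ` ?S"
      proof (rule rev_image_eqI)
        show "z = (\<lambda>(i,a). x(i:=a)) (i, z i)" by (simp only: case_prod_conv) (rule zx)
      qed
    qed
  next
    show "(\<lambda>(i,a). x(i:=a)) ` ?S \<subseteq> {z\<in>hvert n m. hadj n x z \<and> R z}"
    proof
      fix z assume "z \<in> (\<lambda>(i,a). x(i:=a)) ` ?S"
      then obtain i a where ia: "i < n" "a < m" "a \<noteq> x i" "R (x(i:=a))" and zz: "z = x(i:=a)" by auto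
      have "{j. j < n \<and> x j \<noteq> z j} = {i}" using ia zz by auto
      then show "z \<in> {z\<in>hvert n m. hadj n x z \<and> R z}"
        using ia zz hvert_upd[OF x] by (auto simp: hadj_def)
    qed
  qed
  have inj: "inj_on (\<lambda>(i,a). x(i:=a)) ?S"
  proof (rule inj_onI)
    fix u v assume u: "u \<in> ?S" and v: "v \<in> ?S" and e: "(\<lambda>(i,a). x(i:=a)) u = (\<lambda>(i,a). x(i:=a)) v"
    obtain i a where uu: "u = (i,a)" by force
    obtain j b where vv: "v = (j,b)" by force
    have e2: "x(i:=a) = x(j:=b)" using e uu vv by simp
    have "i = j"
    proof (rule ccontr)
      assume "i \<noteq> j"
      then have "(x(i:=a)) i = (x(j:=b)) i" using e2 by simp
      then show False using u uu \<open>i \<noteq> j\<close> by auto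
    qed
    moreover have "a = b" using e2 \<open>i = j\<close> by (metis fun_upd_same)
    ultimately show "u = v" using uu vv by simp
  qed
  have "card {z\<in>hvert n m. hadj n x z \<and> R z} = card ?S"
    using eq card_image[OF inj] by simp
  also have "\<dots> = (\<Sum>i<n. card {a. a<m \<and> a \<noteq> x i \<and> R (x(i:=a))})"
    by (rule card_SigmaI) auto
  finally show ?thesis .
qed

lemma card_split:
  "card {a. a<m \<and> a\<noteq>b \<and> R a} + card {a. a<m \<and> a\<noteq>b \<and> \<not> R a} = card {a::nat. a<m \<and> a \<noteq> b}"
proof -
  have "{a. a<m \<and> a \<noteq> b} = {a. a<m \<and> a\<noteq>b \<and> R a} \<union> {a. a<m \<and> a\<noteq>b \<and> \<not> R a}" by auto
  then show ?thesis by (simp add: card_Un_disjoint[symmetric] disjoint_iff)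
qed

lemma card_ne: "b < m \<Longrightarrow> card {a::nat. a<m \<and> a \<noteq> b} = m - 1"
proof -
  assume "b < m"
  have "{a::nat. a<m \<and> a \<noteq> b} = {..<m} - {b}" by auto
  then show ?thesis using \<open>b<m\<close> by simp
qed

lemma sum_if_card:
  "finite A \<Longrightarrow> (\<Sum>x\<in>A. if R x then a else b) = a * card {x\<in>A. R x} + (b::nat) * card {x\<in>A. \<not> R x}"
  by (simp add: sum.If_cases Int_def)

lemma split_mod:
  assumes "0 < (q::nat)"
  shows "card {a. a < p*q \<and> \<Phi> a} = (\<Sum>r<q. card {k. k<p \<and> \<Phi> (q*k+r)})"
proof -
  let ?S = "SIGMA r:{..<q}. {k. k<p \<and> \<Phi> (q*k+r)}"
  have eq: "{a. a < p*q \<and> \<Phi> a} = (\<lambda>(r,k). q*k+r) ` ?S"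
  proof
    show "{a. a < p*q \<and> \<Phi> a} \<subseteq> (\<lambda>(r,k). q*k+r) ` ?S"
    proof
      fix a assume a: "a \<in> {a. a < p*q \<and> \<Phi> a}"
      have d: "a = q*(a div q) + a mod q" by simp
      have "a div q < p" using a assms by (simp add: less_mult_imp_div_less mult.commute)
      moreover have "a mod q < q" using assms by simp
      ultimately have "(a mod q, a div q) \<in> ?S" using a d by auto
      then show "a \<in> (\<lambda>(r,k). q*k+r) ` ?S" using d by force
    qed
  next
    show "(\<lambda>(r,k). q*k+r) ` ?S \<subseteq> {a. a < p*q \<and> \<Phi> a}"
    proof
      fix a assume "a \<in> (\<lambda>(r,k). q*k+r) ` ?S"
      then obtain r k where rk: "r < q" "k < p" "\<Phi> (q*k+r)" "a = q*k+r" by auto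
      have "q*k + r < q*k + q" using rk by simp
      also have "\<dots> = q * (Suc k)" by simp
      also have "\<dots> \<le> q * p" using rk by (intro mult_le_mono2) simp
      finally show "a \<in> {a. a < p*q \<and> \<Phi> a}" using rk by (simp add: mult.commute)
    qed
  qed
  have inj: "inj_on (\<lambda>(r,k). q*k+r) ?S"
  proof (rule inj_onI)
    fix u v assume u: "u \<in> ?S" and v: "v \<in> ?S" and e: "(\<lambda>(r,k). q*k+r) u = (\<lambda>(r,k). q*k+r) v"
    obtain r k where uu: "u = (r,k)" by force
    obtain s l where vv: "v = (s,l)" by force
    have e2: "q*k+r = q*l+s" and rs: "r < q" "s < q" using e uu vv u v by auto
    have "(q*k+r) div q = k" "(q*l+s) div q = l" "(q*k+r) mod q = r" "(q*l+s) mod q = s"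
      using rs by auto
    then show "u = v" using e2 uu vv by metis
  qed
  have "card {a. a < p*q \<and> \<Phi> a} = card ?S" using eq card_image[OF inj] by simp
  also have "\<dots> = (\<Sum>r<q. card {k. k<p \<and> \<Phi> (q*k+r)})" by (rule card_SigmaI) auto
  finally show ?thesis .
qed

lemma count_mod:
  assumes "t \<le> (p::nat)" "0 < p"
  shows "card {k. k<p \<and> (K+k) mod p < t} = t"
proof -
  let ?h = "\<lambda>k. (K+k) mod p"
  have inj: "inj_on ?h {k. k<p \<and> (K+k) mod p < t}"
  proof (rule inj_onI)
    fix k l assume k: "k \<in> {k. k<p \<and> (K+k) mod p < t}" and l: "l \<in> {k. k<p \<and> (K+k) mod p < t}"
      and e: "?h k = ?h l"
    have r: "\<And>k. k < p \<Longrightarrow> k = ((K+k) mod p + (p - K mod p)) mod p"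
    proof -
      fix k assume "k < p"
      have "((K+k) mod p + (p - K mod p)) mod p = ((K mod p + k) + (p - K mod p)) mod p"
        by (metis mod_add_left_eq)
      also have "(K mod p + k) + (p - K mod p) = k + p" using assms
        by (simp add: less_imp_le_nat)
      finally show "k = ((K+k) mod p + (p - K mod p)) mod p" using \<open>k<p\<close> by simp
    qed
    show "k = l" using r[of k] r[of l] k l e by simp
  qed
  have im: "?h ` {k. k<p \<and> (K+k) mod p < t} = {..<t}"
  proof
    show "?h ` {k. k<p \<and> (K+k) mod p < t} \<subseteq> {..<t}" by auto
    show "{..<t} \<subseteq> ?h ` {k. k<p \<and> (K+k) mod p < t}"
    proof
      fix j assume j: "j \<in> {..<t}"
      define k where "k = (j + (p - K mod p)) mod p"
      have "(K + k) mod p = (K mod p + (j + (p - K mod p))) mod p"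
        unfolding k_def by (metis mod_add_left_eq mod_add_right_eq)
      also have "K mod p + (j + (p - K mod p)) = j + p" using assms mod_less_divisor[of p K]
        by linarith
      also have "(j + p) mod p = j" using j assms by simp
      finally have "(K+k) mod p = j" .
      moreover have "k < p" unfolding k_def using assms by simp
      ultimately show "j \<in> ?h ` {k. k<p \<and> (K+k) mod p < t}" using j by force
    qed
  qed
  show ?thesis using card_image[OF inj] im by simp
qed

lemma card_compl: "finite B \<Longrightarrow> card {x\<in>B. R x} + card {x\<in>B. \<not> R x} = card B"
proof -
  assume fB: "finite B"
  have "B = {x\<in>B. R x} \<union> {x\<in>B. \<not> R x}" by auto
  moreover have "card ({x\<in>B. R x} \<union> {x\<in>B. \<not> R x}) = card {x\<in>B. R x} + card {x\<in>B. \<not> R x}"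
    using fB by (intro card_Un_disjoint) auto
  ultimately show ?thesis by simp
qed

lemma count_mod2:
  assumes "t \<le> (p::nat)" "0 < p"
  shows "card {k. k<p \<and> \<not> (K+k) mod p < t} = p - t"
proof -
  have "card {k\<in>{..<p}. (K+k) mod p < t} + card {k\<in>{..<p}. \<not> (K+k) mod p < t} = p"
    using card_compl[of "{..<p}"] by simp
  moreover have "{k\<in>{..<p}. (K+k) mod p < t} = {k. k<p \<and> (K+k) mod p < t}" by auto
  moreover have "{k\<in>{..<p}. \<not> (K+k) mod p < t} = {k. k<p \<and> \<not> (K+k) mod p < t}" by auto
  ultimately show ?thesis using count_mod[OF assms, of K] by simp
qed




lemma sq_fact: "(q::nat) \<ge> 1 \<Longrightarrow> (q+1)*(q-1) = q^2 - 1"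
  by (cases q) (auto simp: power2_eq_square algebra_simps)

locale cons =
  fixes q p t :: nat and f :: "(nat\<Rightarrow>nat)\<Rightarrow>nat" and P :: "(nat\<Rightarrow>nat) set set"
  assumes q2: "q \<ge> 2" and pp: "0 < p" and tp: "t < p"
  and col: "is_coloring (q+1) q (q^2-1) 1 f"
  and lines: "\<forall>L\<in>P. is_line (q+1) q L"
  and disj: "\<forall>L1\<in>P. \<forall>L2\<in>P. L1 \<noteq> L2 \<longrightarrow> L1 \<inter> L2 = {}"
  and cover: "\<Union>P = {x\<in>hvert (q+1) q. f x = 2}"
begin

abbreviation "n \<equiv> q + 1"
abbreviation "V \<equiv> hvert n q"

lemma fV: "f ` V = {1,2}" using col by (simp add: is_coloring_def)

lemma fval: "x \<in> V \<Longrightarrow> f x = 1 \<or> f x = 2" using fV by blast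

lemma F1:
  assumes x: "x \<in> V" and fx: "f x = 1" and i: "i < n" and r: "r < q" "r \<noteq> x i"
  shows "f (x(i:=r)) = 2"
proof -
  let ?A = "\<lambda>i. card {a. a<q \<and> a \<noteq> x i \<and> f (x(i:=a)) = 2}"
  let ?B = "\<lambda>i. card {a. a<q \<and> a \<noteq> x i \<and> \<not> f (x(i:=a)) = 2}"
  have "card {z\<in>V. hadj n x z \<and> f z = 2} = q^2 - 1" using col x fx by (simp add: is_coloring_def)
  then have sA: "(\<Sum>i<n. ?A i) = q^2 - 1" using nbr_decomp[OF x] by simp
  have xi: "\<And>i. i < n \<Longrightarrow> x i < q" using x by (simp add: hvert_def)
  have "(\<Sum>i<n. ?A i + ?B i) = (\<Sum>i<n. q - 1)"
    by (rule sum.cong) (auto simp: card_split card_ne xi)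
  also have "\<dots> = q^2 - 1" using sq_fact[of q] q2 by simp
  finally have "(\<Sum>i<n. ?B i) = 0" using sA by (simp add: sum.distrib)
  then have "\<forall>j\<in>{..<n}. ?B j = 0" by (meson finite_lessThan sum_eq_0_iff)
  then have "?B i = 0" using i by blast
  moreover have "finite {a. a<q \<and> a \<noteq> x i \<and> \<not> f (x(i:=a)) = 2}" by simp
  ultimately have "{a. a<q \<and> a \<noteq> x i \<and> \<not> f (x(i:=a)) = 2} = {}" by (simp only: card_0_eq)
  then show ?thesis using r by blast
qed

lemma F2:
  assumes x: "x \<in> V" and fx: "f x = 2"
  shows "(\<Sum>i<n. card {a. a<q \<and> a \<noteq> x i \<and> f (x(i:=a)) = 1}) = 1"
proof -
  have "card {z\<in>V. hadj n x z \<and> f z = 1} = 1" using col x fx by (simp add: is_coloring_def)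
  then show ?thesis using nbr_decomp[OF x] by simp
qed

definition line :: "(nat\<Rightarrow>nat) \<Rightarrow> nat \<Rightarrow> (nat\<Rightarrow>nat) set" where
  "line x d = {x(d:=a) | a. a<q}"

lemma lineD: "L \<in> P \<Longrightarrow> z \<in> L \<Longrightarrow> z \<in> V \<and> f z = 2" using cover by blast

lemma line_mem: "a < q \<Longrightarrow> x(d:=a) \<in> line x d" by (auto simp: line_def)
lemma line_self: "x d < q \<Longrightarrow> x \<in> line x d" using line_mem[of "x d" x d] by simp
lemma line_agree: "z \<in> line x d \<Longrightarrow> j \<noteq> d \<Longrightarrow> z j = x j" by (auto simp: line_def)
lemma line_same: "L1 \<in> P \<Longrightarrow> L2 \<in> P \<Longrightarrow> w \<in> L1 \<Longrightarrow> w \<in> L2 \<Longrightarrow> L1 = L2" using disj by blast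

lemma ex_dir:
  assumes "x \<in> V" "f x = 2" shows "\<exists>d<n. line x d \<in> P"
proof -
  obtain L where L: "L \<in> P" "x \<in> L" using cover assms by blast
  then obtain d w where dw: "d < n" "w \<in> V" "L = {w(d:=a) | a. a<q}"
    using lines by (auto simp: is_line_def)
  then obtain a0 where "x = w(d:=a0)" using L by auto
  then have "line x d = L" using dw by (auto simp: line_def)
  then show ?thesis using dw L by blast
qed

definition dir :: "(nat\<Rightarrow>nat) \<Rightarrow> nat" where
  "dir x = (SOME d. d<n \<and> line x d \<in> P)"

lemma dir: "x \<in> V \<Longrightarrow> f x = 2 \<Longrightarrow> dir x < n \<and> line x (dir x) \<in> P"
  unfolding dir_def using someI_ex[OF ex_dir] by blast

lemma dir_back:
  assumes x: "x \<in> V" and i: "i < n" and r: "r < q" "r \<noteq> x i"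
    and f2: "f (x(i:=r)) = 2" and di: "dir (x(i:=r)) = i"
  shows "f x = 2 \<and> dir x = i"
proof -
  let ?x' = "x(i:=r)"
  have x'V: "?x' \<in> V" using hvert_upd[OF x i r(1)] .
  have L': "line ?x' i \<in> P" using dir[OF x'V f2] di by simp
  have xi: "x i < q" using x i by (simp add: hvert_def)
  have "x = ?x'(i := x i)" by simp
  then have xin: "x \<in> line ?x' i" using line_mem[OF xi, of ?x' i] by simp
  then have fx: "f x = 2" using lineD[OF L'] by blast
  have Ld: "line x (dir x) \<in> P" "dir x < n" using dir[OF x fx] by auto
  have "x \<in> line x (dir x)" using line_self x Ld(2) by (simp add: hvert_def)
  then have eq: "line x (dir x) = line ?x' i" using line_same[OF Ld(1) L'] xin by blast
  have "?x' \<in> line ?x' i" using line_self[of ?x' i] r by simp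
  then have x'in: "?x' \<in> line x (dir x)" using eq by simp
  have "dir x = i"
  proof (rule ccontr)
    assume "dir x \<noteq> i"
    then have "?x' i = x i" using line_agree[OF x'in] by metis
    then show False using r by simp
  qed
  then show ?thesis using fx by simp
qed

lemma dir_line:
  assumes x: "x \<in> V" and fx: "f x = 2" and r: "r < q"
  shows "f (x(dir x:=r)) = 2 \<and> dir (x(dir x:=r)) = dir x"
proof -
  let ?d = "dir x"
  let ?x' = "x(?d:=r)"
  have Ld: "line x ?d \<in> P" "?d < n" using dir[OF x fx] by auto
  have x'in: "?x' \<in> line x ?d" using line_mem[OF r] .
  then have fx': "f ?x' = 2" and x'V: "?x' \<in> V" using lineD[OF Ld(1)] by auto
  show ?thesis
  proof (cases "r = x ?d")
    case True then show ?thesis using fx by simp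
  next
    case False
    have Le: "line ?x' (dir ?x') \<in> P" "dir ?x' < n" using dir[OF x'V fx'] by auto
    have "?x' \<in> line ?x' (dir ?x')" using line_self x'V Le(2) by (simp add: hvert_def)
    then have eq: "line ?x' (dir ?x') = line x ?d" using line_same[OF Le(1) Ld(1)] x'in by blast
    have "x \<in> line x ?d" using line_self x Ld(2) by (simp add: hvert_def)
    then have xin: "x \<in> line ?x' (dir ?x')" using eq by simp
    have "dir ?x' = ?d"
    proof (rule ccontr)
      assume "dir ?x' \<noteq> ?d"
      then have "x ?d = ?x' ?d" using line_agree[OF xin] by metis
      then show False using False by simp
    qed
    then show ?thesis using fx' by simp
  qed
qed

end



context cons begin

abbreviation "W \<equiv> hvert n (p*q)"

definition pr :: "(nat\<Rightarrow>nat) \<Rightarrow> (nat\<Rightarrow>nat)" where "pr y = (\<lambda>i. y i mod q)"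
definition ssum :: "(nat\<Rightarrow>nat) \<Rightarrow> nat \<Rightarrow> nat" where "ssum y e = (\<Sum>j\<in>{..<n}-{e}. y j div q)"
definition g :: "(nat\<Rightarrow>nat) \<Rightarrow> nat" where
  "g y = (if f (pr y) = 1 then 1 else if ssum y (dir (pr y)) mod p < t then 1 else 2)"
definition tau :: "nat \<Rightarrow> nat" where "tau c = (if c = 1 then t else p - t)"
definition inner :: "(nat\<Rightarrow>nat) \<Rightarrow> nat \<Rightarrow> nat \<Rightarrow> nat \<Rightarrow> nat" where
  "inner y i r c = card {k. k<p \<and> q*k+r \<noteq> y i \<and> g (y(i:=q*k+r)) = c}"

lemma q0: "0 < q" using q2 by simp

lemma prW: "y \<in> W \<Longrightarrow> pr y \<in> V" using q0 by (auto simp: hvert_def pr_def)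

lemma pr_upd: "r < q \<Longrightarrow> pr (y(i:=q*k+r)) = (pr y)(i:=r)" by (auto simp: pr_def fun_eq_iff)

lemma yi_dec: "r < q \<Longrightarrow> (q*k+r = y i) \<longleftrightarrow> (r = pr y i \<and> k = y i div q)"
proof
  assume r: "r < q" and e: "q*k+r = y i"
  have "(q*k+r) mod q = r" "(q*k+r) div q = k" using r by auto
  then show "r = pr y i \<and> k = y i div q" using e by (simp add: pr_def)
next
  assume "r = pr y i \<and> k = y i div q"
  then show "q*k+r = y i" by (simp add: pr_def)
qed

lemma y_rebuild: "y(i := q*(y i div q) + pr y i) = y" by (simp add: pr_def)

lemma kap_lt: "y \<in> W \<Longrightarrow> i < n \<Longrightarrow> y i div q < p"
  by (auto simp: hvert_def less_mult_imp_div_less)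

lemma ssum_same: "ssum (y(i:=a)) i = ssum y i" unfolding ssum_def by (rule sum.cong) auto

lemma ssum_other:
  assumes "i < n" "e \<noteq> i" "r < q"
  shows "ssum (y(i:=q*k+r)) e = (\<Sum>j\<in>{..<n}-{e}-{i}. y j div q) + k"
proof -
  have iin: "i \<in> {..<n}-{e}" using assms by auto
  have "ssum (y(i:=q*k+r)) e = (y(i:=q*k+r)) i div q + (\<Sum>j\<in>{..<n}-{e}-{i}. (y(i:=q*k+r)) j div q)"
    unfolding ssum_def by (rule sum.remove[OF _ iin]) simp
  also have "(\<Sum>j\<in>{..<n}-{e}-{i}. (y(i:=q*k+r)) j div q) = (\<Sum>j\<in>{..<n}-{e}-{i}. y j div q)"
    by (rule sum.cong) auto
  finally show ?thesis using assms by (simp add: add.commute fun_upd_def)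
qed

lemma total:
  assumes y: "y \<in> W"
  shows "card {z\<in>W. hadj n y z \<and> g z = c} = (\<Sum>i<n. \<Sum>r<q. inner y i r c)"
proof -
  have "card {z\<in>W. hadj n y z \<and> g z = c} = (\<Sum>i<n. card {a. a<p*q \<and> a \<noteq> y i \<and> g (y(i:=a)) = c})"
    by (rule nbr_decomp[OF y])
  also have "\<dots> = (\<Sum>i<n. \<Sum>r<q. inner y i r c)"
    unfolding inner_def by (rule sum.cong[OF refl]) (rule split_mod[OF q0])
  finally show ?thesis .
qed

lemma inner_I:
  assumes y: "y \<in> W" and i: "i < n" and r: "r < q" and f1: "f ((pr y)(i:=r)) = 1"
  shows "c \<noteq> 1 \<Longrightarrow> inner y i r c = 0" and "r \<noteq> pr y i \<Longrightarrow> inner y i r 1 = p"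
proof -
  have G: "\<And>k. g (y(i:=q*k+r)) = 1" using f1 pr_upd[OF r] by (simp add: g_def)
  show "c \<noteq> 1 \<Longrightarrow> inner y i r c = 0" unfolding inner_def using G by simp
  assume "r \<noteq> pr y i"
  then have "{k. k<p \<and> q*k+r \<noteq> y i \<and> g (y(i:=q*k+r)) = 1} = {..<p}" using G yi_dec[OF r] by auto
  then show "inner y i r 1 = p" unfolding inner_def by simp
qed

lemma inner_II:
  assumes y: "y \<in> W" and i: "i < n" and r: "r < q" and f2: "f ((pr y)(i:=r)) = 2"
    and di: "dir ((pr y)(i:=r)) = i" and c: "c \<noteq> g y"
  shows "inner y i r c = 0"
proof -
  have xV: "pr y \<in> V" using prW[OF y] .
  have fd: "f (pr y) = 2 \<and> dir (pr y) = i"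
  proof (cases "r = pr y i")
    case True then show ?thesis using f2 di by simp
  next
    case False then show ?thesis using dir_back[OF xV i r False f2 di] by simp
  qed
  have "\<And>k. g (y(i:=q*k+r)) = g y"
    using fd f2 di pr_upd[OF r] ssum_same by (simp add: g_def)
  then show ?thesis unfolding inner_def using c by simp
qed

lemma inner_III:
  assumes y: "y \<in> W" and i: "i < n" and r: "r < q" and f2: "f ((pr y)(i:=r)) = 2"
    and di: "dir ((pr y)(i:=r)) \<noteq> i" and c: "c = 1 \<or> c = 2"
  shows "inner y i r c = tau c - (if r = pr y i \<and> g y = c then 1 else 0)"
proof -
  define e where "e = dir ((pr y)(i:=r))"
  define K where "K = (\<Sum>j\<in>{..<n}-{e}-{i}. y j div q)"
  define G where "G k = (if (K+k) mod p < t then 1 else (2::nat))" for k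
  have ei: "e \<noteq> i" using di e_def by simp
  have gG: "\<And>k. g (y(i:=q*k+r)) = G k"
    using pr_upd[OF r] f2 ssum_other[OF i ei r] unfolding g_def G_def K_def e_def by simp
  have cardG: "card {k. k<p \<and> G k = c} = tau c"
  proof (cases "c = 1")
    case True
    then have "{k. k<p \<and> G k = c} = {k. k<p \<and> (K+k) mod p < t}" by (auto simp: G_def)
    then show ?thesis using count_mod[of t p K] tp pp True by (simp add: tau_def)
  next
    case False
    then have "{k. k<p \<and> G k = c} = {k. k<p \<and> \<not> (K+k) mod p < t}" using c by (auto simp: G_def)
    then show ?thesis using count_mod2[of t p K] tp pp False by (simp add: tau_def)
  qed
  show ?thesis
  proof (cases "r = pr y i")
    case False
    then have "{k. k<p \<and> q*k+r \<noteq> y i \<and> g (y(i:=q*k+r)) = c} = {k. k<p \<and> G k = c}"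
      using yi_dec[OF r] gG by auto
    then show ?thesis unfolding inner_def using cardG False by simp
  next
    case True
    let ?k = "y i div q"
    have "{k. k<p \<and> q*k+r \<noteq> y i \<and> g (y(i:=q*k+r)) = c} = {k. k<p \<and> G k = c} - {?k}"
      using yi_dec[OF r] gG True by auto
    moreover have "G ?k = g y" using gG[of ?k] True y_rebuild[of y i] by simp
    moreover have "?k < p" using kap_lt[OF y i] .
    ultimately show ?thesis unfolding inner_def using cardG True
      by (cases "g y = c") (auto simp: card_Diff_singleton_if)
  qed
qed

end



context cons begin

lemma sum_skip: "b < (q::nat) \<Longrightarrow> (\<Sum>r<q. if r = b then 0 else v) = (q - 1) * v"
proof -
  assume b: "b < q"
  have "(\<Sum>r<q. if r = b then 0 else v) = v * card {r\<in>{..<q}. \<not> r = b}"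
    by (simp add: sum_if_card)
  also have "{r\<in>{..<q}. \<not> r = b} = {r. r<q \<and> r \<noteq> b}" by auto
  finally show ?thesis using card_ne[OF b] by simp
qed

lemma caseC:
  assumes y: "y \<in> W" and f1: "f (pr y) = 1"
  shows "card {z\<in>W. hadj n y z \<and> g z = 2} = (q^2-1)*(p-t)"
proof -
  have xV: "pr y \<in> V" using prW[OF y] .
  have inn: "inner y i r 2 = (if r = pr y i then 0 else p - t)" if i: "i < n" and r: "r < q" for i r
  proof (cases "r = pr y i")
    case True then show ?thesis using inner_I(1)[OF y i r] f1 by simp
  next
    case False
    have f2: "f ((pr y)(i:=r)) = 2" using F1[OF xV f1 i r False] .
    have "dir ((pr y)(i:=r)) \<noteq> i" using dir_back[OF xV i r False f2] f1 by auto
    then show ?thesis using inner_III[OF y i r f2] False by (simp add: tau_def)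
  qed
  have xi: "\<And>i. i < n \<Longrightarrow> pr y i < q" using xV by (simp add: hvert_def)
  have "card {z\<in>W. hadj n y z \<and> g z = 2} = (\<Sum>i<n. \<Sum>r<q. inner y i r 2)" by (rule total[OF y])
  also have "\<dots> = (\<Sum>i<n. (q-1)*(p-t))"
    by (rule sum.cong[OF refl]) (simp add: inn sum_skip xi)
  also have "\<dots> = (q+1)*(q-1)*(p-t)" by (metis card_lessThan mult.assoc sum_constant of_nat_id)
  also have "\<dots> = (q^2-1)*(p-t)" using sq_fact[of q] q2 by simp
  finally show ?thesis .
qed

lemma caseD:
  assumes y: "y \<in> W" and f2: "f (pr y) = 2" and c: "c = 1 \<or> c = 2" and cg: "c \<noteq> g y"
  shows "card {z\<in>W. hadj n y z \<and> g z = c} = tau c * (q*q - 1) + (if c = 1 then p else 0)"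
proof -
  define x where "x = pr y"
  define d where "d = dir x"
  define A where "A i = card {r. r<q \<and> r \<noteq> x i \<and> f (x(i:=r)) = 1}" for i
  define \<rho> where "\<rho> = (if c = 1 then p else 0)"
  have xV: "x \<in> V" using prW[OF y] x_def by simp
  have fx: "f x = 2" using f2 x_def by simp
  have dn: "d < n" using dir[OF xV fx] d_def by simp
  have xi: "\<And>i. i < n \<Longrightarrow> x i < q" using xV by (simp add: hvert_def)
  have zero: "(\<Sum>r<q. inner y d r c) = 0"
  proof -
    have "inner y d r c = 0" if r: "r < q" for r
      using inner_II[OF y dn r] dir_line[OF xV fx r] cg x_def d_def by simp
    then show ?thesis by simp
  qed
  have Ad: "A d = 0"
  proof -
    have "{r. r<q \<and> r \<noteq> x d \<and> f (x(d:=r)) = 1} = {}" using dir_line[OF xV fx] d_def by auto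
    then show ?thesis unfolding A_def by simp
  qed
  have inn: "inner y i r c = (if r \<noteq> x i \<and> f (x(i:=r)) = 1 then \<rho> else tau c)"
    if i: "i < n" and id: "i \<noteq> d" and r: "r < q" for i r
  proof (cases "r = x i")
    case True
    have "dir ((pr y)(i:=r)) \<noteq> i" using True id d_def x_def by simp
    then show ?thesis using inner_III[OF y i r _ _ c] True fx x_def cg by simp
  next
    case False
    show ?thesis
    proof (cases "f (x(i:=r)) = 1")
      case True
      then show ?thesis using inner_I[OF y i r] False x_def c \<rho>_def by auto
    next
      case F: False
      have f2': "f (x(i:=r)) = 2" using fval[OF hvert_upd[OF xV i r]] F by simp
      have "dir (x(i:=r)) \<noteq> i" using dir_back[OF xV i r False f2'] id d_def by auto
      then show ?thesis using inner_III[OF y i r _ _ c] False F f2' x_def by simp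
    qed
  qed
  have rowsum: "(\<Sum>r<q. inner y i r c) = \<rho> * A i + tau c * (q - A i)" if i: "i < n" and id: "i \<noteq> d" for i
  proof -
    have "(\<Sum>r<q. inner y i r c) = (\<Sum>r<q. if r \<noteq> x i \<and> f (x(i:=r)) = 1 then \<rho> else tau c)"
      by (rule sum.cong[OF refl]) (simp add: inn[OF i id])
    also have "\<dots> = \<rho> * card {r\<in>{..<q}. r \<noteq> x i \<and> f (x(i:=r)) = 1}
        + tau c * card {r\<in>{..<q}. \<not> (r \<noteq> x i \<and> f (x(i:=r)) = 1)}"
      by (rule sum_if_card) simp
    also have "card {r\<in>{..<q}. r \<noteq> x i \<and> f (x(i:=r)) = 1} = A i"
      unfolding A_def by (rule arg_cong[where f=card]) auto
    also have "card {r\<in>{..<q}. \<not> (r \<noteq> x i \<and> f (x(i:=r)) = 1)} = q - A i"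
    proof -
      have "card {r\<in>{..<q}. r \<noteq> x i \<and> f (x(i:=r)) = 1} + card {r\<in>{..<q}. \<not> (r \<noteq> x i \<and> f (x(i:=r)) = 1)} = q"
        using card_compl[of "{..<q}" "\<lambda>r. r \<noteq> x i \<and> f (x(i:=r)) = 1"] by simp
      moreover have "card {r\<in>{..<q}. r \<noteq> x i \<and> f (x(i:=r)) = 1} = A i"
        unfolding A_def by (rule arg_cong[where f=card]) auto
      ultimately show ?thesis by simp
    qed
    finally show ?thesis .
  qed
  have dset: "d \<in> {..<n}" using dn by simp
  have sumA: "(\<Sum>i\<in>{..<n}-{d}. A i) = 1"
  proof -
    have "(\<Sum>i<n. A i) = 1" using F2[OF xV fx] unfolding A_def by simp
    moreover have "(\<Sum>i<n. A i) = A d + (\<Sum>i\<in>{..<n}-{d}. A i)"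
      by (rule sum.remove[OF _ dset]) simp
    ultimately show ?thesis using Ad by linarith
  qed
  have Ale: "\<And>i. A i \<le> q"
  proof -
    fix i
    have "A i \<le> card {..<q}" unfolding A_def by (rule card_mono) auto
    then show "A i \<le> q" by simp
  qed
  have cardd: "card ({..<n}-{d}) = q" using dset by simp
  have sumB: "(\<Sum>i\<in>{..<n}-{d}. q - A i) = q*q - 1"
  proof -
    have "(\<Sum>i\<in>{..<n}-{d}. q - A i) + (\<Sum>i\<in>{..<n}-{d}. A i) = (\<Sum>i\<in>{..<n}-{d}. q)"
      by (simp add: sum.distrib[symmetric] Ale)
    then show ?thesis using sumA cardd by simp
  qed
  have "card {z\<in>W. hadj n y z \<and> g z = c} = (\<Sum>i<n. \<Sum>r<q. inner y i r c)" by (rule total[OF y])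
  also have "\<dots> = (\<Sum>r<q. inner y d r c) + (\<Sum>i\<in>{..<n}-{d}. \<Sum>r<q. inner y i r c)"
    by (rule sum.remove[OF _ dset]) simp
  also have "\<dots> = (\<Sum>i\<in>{..<n}-{d}. \<rho> * A i + tau c * (q - A i))"
    using zero by (simp add: rowsum)
  also have "\<dots> = \<rho> * (\<Sum>i\<in>{..<n}-{d}. A i) + tau c * (\<Sum>i\<in>{..<n}-{d}. q - A i)"
    by (simp add: sum.distrib sum_distrib_left)
  also have "\<dots> = tau c * (q*q - 1) + \<rho>" using sumA sumB by simp
  finally show ?thesis using \<rho>_def by simp
qed

end



context cons begin

lemma gval: "g y = 1 \<or> g y = 2" by (simp add: g_def)

lemma img: "g ` W = {1,2}"
proof -
  have "1 \<in> f ` V" "2 \<in> f ` V" using fV by auto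
  then obtain x0 x1 where x0: "x0 \<in> V" "f x0 = 1" and x1: "x1 \<in> V" "f x1 = 2" by (metis imageE)
  have "q \<le> p*q" using pp by simp
  note qpq = less_le_trans[OF _ this]
  have x0W: "x0 \<in> W" using x0 qpq by (auto simp: hvert_def)
  have "pr x0 = x0"
  proof
    fix i show "pr x0 i = x0 i" using x0 by (cases "i < n") (auto simp: pr_def hvert_def)
  qed
  then have g0: "g x0 = 1" using x0 by (simp add: g_def)
  define d where "d = dir x1"
  define j where "j = (if d = 0 then 1 else (0::nat))"
  define y where "y = x1(j := x1 j + q*t)"
  have jn: "j < n" "j \<noteq> d" using q2 j_def by auto
  have x1j: "x1 j < q" using x1 jn by (simp add: hvert_def)
  have "x1 j + q*t < q + q*t" using x1j by simp
  also have "\<dots> = q * Suc t" by simp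
  also have "\<dots> \<le> q * p" using tp by (intro mult_le_mono2) simp
  finally have "x1 j + q*t < p*q" by (simp add: mult.commute)
  then have yW: "y \<in> W" using x1 jn qpq unfolding y_def by (auto simp: hvert_def)
  have "pr y = x1"
  proof
    fix i show "pr y i = x1 i" using x1 x1j by (cases "i < n") (auto simp: pr_def hvert_def y_def)
  qed
  moreover have "ssum y d = t"
  proof -
    have jin: "j \<in> {..<n}-{d}" using jn by simp
    have "ssum y d = y j div q + (\<Sum>i\<in>{..<n}-{d}-{j}. y i div q)"
      unfolding ssum_def by (rule sum.remove[OF _ jin]) simp
    also have "(\<Sum>i\<in>{..<n}-{d}-{j}. y i div q) = 0"
      using x1 by (auto simp: y_def hvert_def)
    also have "y j div q = t" using x1j by (simp add: y_def)
    finally show ?thesis by simp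
  qed
  ultimately have "g y = 2" using x1 tp d_def by (simp add: g_def)
  have "g ` W \<subseteq> {1,2}" using gval by auto
  moreover have "1 \<in> g ` W" using g0 x0W by force
  moreover have "2 \<in> g ` W" using \<open>g y = 2\<close> yW by force
  ultimately show ?thesis by blast
qed

lemma coloring: "is_coloring n (p*q) ((q^2-1)*(p-t)) ((q^2-1)*t+p) g"
  unfolding is_coloring_def
proof (intro conjI ballI impI)
  show "g ` W = {1,2}" by (rule img)
next
  fix y assume y: "y \<in> W" and g1: "g y = 1"
  show "card {z\<in>W. hadj n y z \<and> g z = 2} = (q^2-1)*(p-t)"
  proof (cases "f (pr y) = 1")
    case True then show ?thesis by (rule caseC[OF y])
  next
    case False
    then have f2: "f (pr y) = 2" using fval[OF prW[OF y]] by simp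
    have e: "tau 2 * (q*q-1) + (if (2::nat) = 1 then p else 0) = (q^2-1)*(p-t)"
      by (simp add: tau_def power2_eq_square ac_simps)
    have "card {z\<in>W. hadj n y z \<and> g z = 2} = tau 2 * (q*q-1) + (if (2::nat) = 1 then p else 0)"
      by (rule caseD[OF y f2]) (use g1 in auto)
    then show ?thesis using e by simp
  qed
next
  fix y assume y: "y \<in> W" and g2: "g y = 2"
  have "f (pr y) \<noteq> 1" using g2 by (auto simp: g_def)
  then have f2: "f (pr y) = 2" using fval[OF prW[OF y]] by simp
  have e: "tau 1 * (q*q-1) + (if (1::nat) = 1 then p else 0) = (q^2-1)*t+p"
    by (simp add: tau_def power2_eq_square ac_simps)
  have "card {z\<in>W. hadj n y z \<and> g z = 1} = tau 1 * (q*q-1) + (if (1::nat) = 1 then p else 0)"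
    by (rule caseD[OF y f2]) (use g2 in auto)
  then show "card {z\<in>W. hadj n y z \<and> g z = 1} = (q^2-1)*t+p" using e by simp
qed

end

lemma ar:
  fixes q p t :: nat assumes "q \<ge> 2" "t < p"
  shows "main_eigenvalue (q + 1) (p * q) ((q^2 - 1) * (p - t)) ((q^2 - 1) * t + p) = int q * (int p - 1) - 1"
proof -
  have q1: "int (q^2 - 1) = int q * int q - 1" using assms(1) by (simp add: of_nat_diff power2_eq_square)
  have pt': "int (p - t) = int p - int t" using assms by (simp add: of_nat_diff)
  have "main_eigenvalue (q + 1) (p * q) ((q^2 - 1) * (p - t)) ((q^2 - 1) * t + p)
      = (int q + 1) * (int p * int q - 1) - ((int q * int q - 1) * (int p - int t) + ((int q * int q - 1) * int t + int p))"
    unfolding main_eigenvalue_def by (simp only: of_nat_add of_nat_mult q1 pt' of_nat_1) 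
  also have "\<dots> = int q * (int p - 1) - 1" by (simp add: algebra_simps)
  finally show ?thesis .
qed

theorem theorem8:
  fixes q :: nat and f :: "(nat \<Rightarrow> nat) \<Rightarrow> nat"
  assumes "q \<ge> 2"
    and "is_coloring (q + 1) q (q^2 - 1) 1 f"
    and "perfect_code (q + 1) q {x \<in> hvert (q + 1) q. f x = 1}"
    and "partitionable_into_lines (q + 1) q {x \<in> hvert (q + 1) q. f x = 2}"
  shows "\<forall>p t. 0 < p \<and> t < p \<longrightarrow>
           (\<exists>g. is_coloring (q + 1) (p * q) ((q^2 - 1) * (p - t)) ((q^2 - 1) * t + p) g)
           \<and> main_eigenvalue (q + 1) (p * q) ((q^2 - 1) * (p - t)) ((q^2 - 1) * t + p)
               = int q * (int p - 1) - 1"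
proof (intro allI impI)
  fix p t :: nat assume pt: "0 < p \<and> t < p"
  from assms(4) obtain P where P0: "(\<forall>L\<in>P. is_line (q + 1) q L) \<and> (\<forall>L1\<in>P. \<forall>L2\<in>P. L1 \<noteq> L2 \<longrightarrow> L1 \<inter> L2 = {})
    \<and> \<Union>P = {x \<in> hvert (q + 1) q. f x = 2}"
    unfolding partitionable_into_lines_def by (rule exE)
  note P = conjunct1[OF P0] conjunct1[OF conjunct2[OF P0]] conjunct2[OF conjunct2[OF P0]]
  have pp': "0 < p" and tp': "t < p" using pt by (rule conjunct1, rule conjunct2)
  have c: "cons q p t f P" by (rule cons.intro[OF assms(1) pp' tp' assms(2) P])
  interpret cons q p t f P by (rule c)
  have ex: "\<exists>g. is_coloring (q + 1) (p * q) ((q^2 - 1) * (p - t)) ((q^2 - 1) * t + p) g"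
  proof (rule exI)
    show "is_coloring (q + 1) (p * q) ((q^2 - 1) * (p - t)) ((q^2 - 1) * t + p) g" by (rule coloring)
  qed
  show "(\<exists>g. is_coloring (q + 1) (p * q) ((q^2 - 1) * (p - t)) ((q^2 - 1) * t + p) g)
           \<and> main_eigenvalue (q + 1) (p * q) ((q^2 - 1) * (p - t)) ((q^2 - 1) * t + p)
               = int q * (int p - 1) - 1" using ex ar[OF assms(1) tp'] by (rule conjI)
qed


end
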